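(* Let $y_2>0$ and equip $V^{5,2}$ with the Sasakian structure $\eta=X^1$, $\xi=X_1$, $g=4y_2^2Q|_{\mathfrak m_1}+y_2Q|_{\mathfrak m_2\oplus\mathfrak m_3}$, and with a $\mathrm{G}_2$-structure $\varphi$ with parameters $x=a$, $y=b$, $z^2=4(a^2+b^2)^{4/3}$ inducing this metric. Let $A$ be a connection on a principal (or vector) bundle over $V^{5,2}$ with curvature $F_A$. If $A$ is a self-dual contact instanton, i.e. $\ast(\eta\wedge\omega\wedge F_A)=F_A$ with $\omega=\frac12 d\eta$, then $A$ is a $\mathrm{G}_2$-instanton, i.e. $\ast(\varphi\wedge F_A)=-F_A$.
   Context: Basis of $\mathfrak{so}(5)$ (with $E_{ij}$ the elementary $5\times5$ matrices): $e_1=E_{12}-E_{21}$, $e_2=E_{13}-E_{31}$, $e_3=E_{14}-E_{41}$, $e_4=E_{15}-E_{51}$, $e_5=E_{23}-E_{32}$, $e_6=E_{24}-E_{42}$, $e_7=E_{25}-E_{52}$, $e_8=E_{34}-E_{43}$, $e_9=E_{35}-E_{53}$, $e_{10}=E_{54}-E_{45}$. $V^{5,2}=\mathrm{SO}(5)/\mathrm{SO}(3)$, $\mathrm{Lie}(\mathrm{SO}(3))=\mathrm{span}\{e_8,e_9,e_{10}\}$, $\mathfrak m=\mathrm{span}\{e_1,\dots,e_7\}$ identified with the tangent space at the origin; invariant tensors = $\mathrm{Ad}(\mathrm{SO}(3))$-invariant tensors on $\mathfrak m$. $Q(A,B)=\frac12\mathrm{tr}(AB^T)$, $\mathfrak m_1=\mathrm{span}\{e_1\}$,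 $\mathfrak m_2=\mathrm{span}\{e_2,e_3,e_4\}$, $\mathfrak m_3=\mathrm{span}\{e_5,e_6,e_7\}$. With $y_1=4y_2^2$, $y_3=y_2$: orthonormal basis $X_1=e_1/\sqrt{y_1}$, $X_i=e_i/\sqrt{y_2}$ ($i=2,\dots,7$), dual coframe $X^i$; then $\omega=\frac12 d\eta=X^{25}+X^{36}+X^{47}$. The $\mathrm{G}_2$-structure with parameters $(a,b,x,y,z)$ is the invariant 3-form $-z\,e^1\wedge(e^{25}+e^{36}+e^{47})+x\,e^{234}+a(-e^{267}+e^{357}-e^{456})+b(e^{237}-e^{246}+e^{345})-y\,e^{567}$ (with $e^i$ the dual basis of $\mathfrak m^*$), which for $x=a$, $y=b$, $z^2=4(a^2+b^2)^{4/3}$ induces the metric $g$ above. $\ast$ denotes the Hodge star of $g$ with the orientation induced by $\varphi$; curvature is a Lie-algebra-valued (adjoint bundle valued) 2-form and $\ast$, $\wedge$ act on its form part.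
   Formalization: The parameter z is the positive root of $z^2=4(a^2+b^2)^{4/3}$, that is z > 0, with the orientation induced by $\varphi$ fixed by Bryant's convention. The paper assumes this as well. *)

theory Defs
  imports "HOL-Analysis.Analysis"
begin

text \<open>Exterior algebra of the 7-dimensional space m, in coordinates w.r.t. the
  g-orthonormal frame X_1,...,X_7 (indices 1..7).  A form with values in a real
  vector space 'v is a coefficient function on index sets: the coefficient of
  X^I (I written in increasing order) is  F I.  Coefficients on sets not contained
  in {1..7} are irrelevant (and are 0 for all forms built below).\<close>

definition idx :: "nat set" where "idx = {1..7}"

definition shuffle_sign :: "nat set \<Rightarrow> nat set \<Rightarrow> real" where
  "shuffle_sign I J = (-1) ^ card {(i, j). i \<in> I \<and> j \<in> J \<and> j < i}"

definition wedge :: "(nat set \<Rightarrow> real) \<Rightarrow> (nat set \<Rightarrow> 'v::real_vector) \<Rightarrow> nat set \<Rightarrow> 'v" where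
  "wedge \<alpha> F K = (if K \<subseteq> idx then
      (\<Sum>I\<in>Pow K. (shuffle_sign I (K - I) * \<alpha> I) *\<^sub>R F (K - I)) else 0)"

definition interior :: "nat \<Rightarrow> (nat set \<Rightarrow> 'v::real_vector) \<Rightarrow> nat set \<Rightarrow> 'v" where
  "interior u F K = (if u \<in> idx \<and> K \<subseteq> idx \<and> u \<notin> K
      then shuffle_sign {u} K *\<^sub>R F (insert u K) else 0)"

text \<open>Hodge star of the metric for which X_1..X_7 is orthonormal, with orientation
  s * X^{1..7} (s = 1 or -1):  X^I wedge *X^I = s X^{1..7}.\<close>
definition hodge :: "real \<Rightarrow> (nat set \<Rightarrow> 'v::real_vector) \<Rightarrow> nat set \<Rightarrow> 'v" where
  "hodge s F K = (if K \<subseteq> idx then (s * shuffle_sign (idx - K) K) *\<^sub>R F (idx - K) else 0)"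

definition basic_form :: "nat set \<Rightarrow> nat set \<Rightarrow> real" where
  "basic_form I K = (if K = I then 1 else 0)"

text \<open>The invariant 3-form with parameters (a,b,x,y,z), in the basis e^I of m*.\<close>
definition phi_e :: "real \<Rightarrow> real \<Rightarrow> real \<Rightarrow> real \<Rightarrow> real \<Rightarrow> nat set \<Rightarrow> real" where
  "phi_e a b x y z K =
     - z * (basic_form {1,2,5} K + basic_form {1,3,6} K + basic_form {1,4,7} K)
     + x * basic_form {2,3,4} K
     + a * (- basic_form {2,6,7} K + basic_form {3,5,7} K - basic_form {4,5,6} K)
     + b * (basic_form {2,3,7} K - basic_form {2,4,6} K + basic_form {3,4,5} K)
     - y * basic_form {5,6,7} K"

text \<open>X_i = e_i / sqrt(y_i), with y_1 = 4 y_2^2 and y_i = y_2 (i = 2..7);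
  hence e^i = X^i / sqrt(y_i).\<close>
definition frame_scale :: "real \<Rightarrow> nat \<Rightarrow> real" where
  "frame_scale y2 i = (if i = 1 then sqrt (4 * y2^2) else sqrt y2)"

definition phi_X :: "real \<Rightarrow> real \<Rightarrow> real \<Rightarrow> real \<Rightarrow> real \<Rightarrow> real \<Rightarrow> nat set \<Rightarrow> real" where
  "phi_X y2 a b x y z K = phi_e a b x y z K / (\<Prod>i\<in>K. frame_scale y2 i)"

text \<open>Contact form eta = X^1 and omega = (1/2) d eta = X^25 + X^36 + X^47.\<close>
definition eta :: "nat set \<Rightarrow> real" where "eta = basic_form {1}"
definition omega :: "nat set \<Rightarrow> real" where
  "omega K = basic_form {2,5} K + basic_form {3,6} K + basic_form {4,7} K"

definition B_phi :: "(nat set \<Rightarrow> real) \<Rightarrow> nat \<Rightarrow> nat \<Rightarrow> real" where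
  "B_phi \<phi> u v = wedge (wedge (interior u \<phi>) (interior v \<phi>)) \<phi> idx"

text \<open>Orientation induced by phi: sign s such that B(v,v) is a positive multiple of
  s X^{1..7} (Bryant's convention B(u,v) = 6 g_phi(u,v) vol_phi).\<close>
definition phi_orientation :: "(nat set \<Rightarrow> real) \<Rightarrow> real" where
  "phi_orientation \<phi> = sgn (B_phi \<phi> 1 1)"

definition induces_metric_g :: "(nat set \<Rightarrow> real) \<Rightarrow> bool" where
  "induces_metric_g \<phi> \<longleftrightarrow> phi_orientation \<phi> \<noteq> 0 \<and>
     (\<forall>u\<in>idx. \<forall>v\<in>idx. B_phi \<phi> u v = 6 * (if u = v then 1 else 0) * phi_orientation \<phi>)"

definition is_two_form :: "(nat set \<Rightarrow> 'v::real_vector) \<Rightarrow> bool" where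
  "is_two_form F \<longleftrightarrow> (\<forall>K. (K \<subseteq> idx \<and> card K = 2) \<or> F K = 0)"

end

theory Submission imports Defs begin

definition cnt :: "nat \<Rightarrow> nat set \<Rightarrow> nat" where "cnt i J = card {j\<in>J. j<i}"

lemma ss_eq: "finite I \<Longrightarrow> finite J \<Longrightarrow> shuffle_sign I J = (-1) ^ (\<Sum>i\<in>I. cnt i J)"
proof -
  assume f: "finite I" "finite J"
  have "{(i, j). i \<in> I \<and> j \<in> J \<and> j < i} = Sigma I (\<lambda>i. {j\<in>J. j<i})" by auto
  then show ?thesis unfolding shuffle_sign_def cnt_def using f by (simp add: card_SigmaI)
qed

lemma cnt_empty: "cnt i {} = 0" by (simp add: cnt_def)
lemma cnt_ins: "finite B \<Longrightarrow> cnt i (insert a B) = (if a \<in> B then cnt i B else if a < i then Suc (cnt i B) else cnt i B)"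
proof -
  assume "finite B"
  have e: "{j \<in> insert a B. j < i} = (if a < i then insert a {j\<in>B. j<i} else {j\<in>B. j<i})" by auto
  show ?thesis unfolding cnt_def e using \<open>finite B\<close> by (auto simp: insert_absorb)
qed
lemma set_ins_eq: "(insert a A = B) = (a \<in> B \<and> A \<subseteq> B \<and> B \<subseteq> insert a A)" by auto

lemma idx_lit: "idx = {1,2,3,4,5,6,7}" unfolding idx_def by auto

lemmas comp = ss_eq cnt_empty cnt_ins insert_Diff_if set_ins_eq idx_lit

lemma finite_sub_idx: "K \<subseteq> idx \<Longrightarrow> finite K" unfolding idx_def using finite_subset by blast

lemma wedge_basic: "wedge (basic_form T) F K = (if K \<subseteq> idx \<and> T \<subseteq> K then shuffle_sign T (K-T) *\<^sub>R F (K-T) else 0)"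
proof (cases "K \<subseteq> idx")
  case True
  then have fin: "finite K" by (rule finite_sub_idx)
  have "(\<Sum>I\<in>Pow K. (shuffle_sign I (K - I) * basic_form T I) *\<^sub>R F (K - I))
      = (\<Sum>I\<in>Pow K. if T = I then shuffle_sign T (K - T) *\<^sub>R F (K - T) else 0)"
    by (rule sum.cong) (auto simp: basic_form_def)
  also have "\<dots> = (if T \<subseteq> K then shuffle_sign T (K-T) *\<^sub>R F (K-T) else 0)"
    using fin by (simp add: sum.delta')
  finally show ?thesis using True by (simp add: wedge_def)
qed (simp add: wedge_def)

lemma wedge_basic_right: "wedge f (basic_form T) K = (if K \<subseteq> idx \<and> T \<subseteq> K then shuffle_sign (K-T) T * f (K-T) else 0)"
proof (cases "K \<subseteq> idx")
  case True
  then have fin: "finite K" by (rule finite_sub_idx)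
  have "(\<Sum>I\<in>Pow K. (shuffle_sign I (K - I) * f I) *\<^sub>R basic_form T (K - I))
      = (\<Sum>I\<in>Pow K. if K - T = I \<and> T \<subseteq> K then shuffle_sign (K-T) T * f (K - T) else 0)"
    by (rule sum.cong) (auto simp: basic_form_def double_diff)
  also have "\<dots> = (if T \<subseteq> K then shuffle_sign (K-T) T * f (K-T) else 0)"
    using fin by (cases "T \<subseteq> K") (auto simp: sum.delta)
  finally show ?thesis using True by (simp add: wedge_def)
qed (simp add: wedge_def)

lemma wedge_add: "wedge (\<lambda>K. f K + g K) F K = wedge f F K + wedge g F K"
  by (simp add: wedge_def sum.distrib algebra_simps scaleR_add_left)
lemma wedge_diff: "wedge (\<lambda>K. f K - g K) F K = wedge f F K - wedge g F K"
  by (simp add: wedge_def sum_subtractf algebra_simps scaleR_diff_left)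
lemma wedge_neg: "wedge (\<lambda>K. - f K) F K = - wedge f F K"
  by (simp add: wedge_def sum_negf)
lemma wedge_smult: "wedge (\<lambda>K. r * f K) F K = r *\<^sub>R wedge f F K"
  by (simp add: wedge_def scaleR_sum_right mult.left_commute)

lemma wedge_add_r: "wedge f (\<lambda>K. g K + h K) K = wedge f g K + wedge f h K"
  by (simp add: wedge_def sum.distrib algebra_simps)
lemma wedge_diff_r: "wedge f (\<lambda>K. g K - h K) K = wedge f g K - wedge f h K"
  by (simp add: wedge_def sum_subtractf algebra_simps)
lemma wedge_neg_r: "wedge f (\<lambda>K. - g K) K = - wedge f g K"
  by (simp add: wedge_def sum_negf)
lemma wedge_smult_r: "wedge f (\<lambda>K. r *\<^sub>R g K) K = r *\<^sub>R wedge f g K"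
  by (simp add: wedge_def scaleR_sum_right mult_ac)

definition phiL :: "real \<Rightarrow> real \<Rightarrow> real \<Rightarrow> nat set \<Rightarrow> real" where
 "phiL c p q = (\<lambda>K. c * (basic_form {1,2,5} K + basic_form {1,3,6} K + basic_form {1,4,7} K)
    + p * (basic_form {2,3,4} K - basic_form {2,6,7} K + basic_form {3,5,7} K - basic_form {4,5,6} K)
    + q * (basic_form {2,3,7} K - basic_form {2,4,6} K + basic_form {3,4,5} K - basic_form {5,6,7} K))"

lemma prod_fs1: assumes "y2 > 0" "a \<noteq> 1" "b \<noteq> 1" "a \<noteq> b"
  shows "(\<Prod>i\<in>{1,a,b}. frame_scale y2 i) = 2 * y2^2"
proof -
  have "sqrt (4 * y2^2) = 2 * y2" using assms by (simp add: real_sqrt_mult)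
  moreover have "sqrt y2 * sqrt y2 = y2" using assms by simp
  ultimately show ?thesis using assms by (simp add: frame_scale_def power2_eq_square)
qed

lemma prod_fs3: assumes "a \<noteq> 1" "b \<noteq> 1" "c \<noteq> 1" "a \<noteq> b" "a \<noteq> c" "b \<noteq> c"
  shows "(\<Prod>i\<in>{a,b,c}. frame_scale y2 i) = sqrt y2 ^ 3"
  using assms by (simp add: frame_scale_def power3_eq_cube)

lemma phi_X_eq: assumes "y2 > 0"
  shows "phi_X y2 a b a b z = phiL (- z / (2 * y2^2)) (a / (sqrt y2)^3) (b / (sqrt y2)^3)"
proof
  fix K
  let ?S = "{{1,2,5},{1,3,6},{1,4,7},{2,3,4},{2,6,7},{3,5,7},{4,5,6},{2,3,7},{2,4,6},{3,4,5},{5,6,7::nat}}"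
  show "phi_X y2 a b a b z K = phiL (- z / (2 * y2^2)) (a / (sqrt y2)^3) (b / (sqrt y2)^3) K"
  proof (cases "K \<in> ?S")
    case True
    then have "K = {1,2,5} \<or> K = {1,3,6} \<or> K = {1,4,7} \<or> K = {2,3,4} \<or> K = {2,6,7} \<or> K = {3,5,7} \<or> K = {4,5,6}
      \<or> K = {2,3,7} \<or> K = {2,4,6} \<or> K = {3,4,5} \<or> K = {5,6,7}" by simp
    then show ?thesis
      unfolding phi_X_def phi_e_def phiL_def basic_form_def
      by (elim disjE) (simp_all only: prod_fs1[OF assms] prod_fs3, simp_all add: set_ins_eq)
  next
    case False
    then show ?thesis
      by (simp add: phi_X_def phi_e_def phiL_def basic_form_def)
  qed
qed

lemma omega_fun: "omega = (\<lambda>K. basic_form {2,5} K + basic_form {3,6} K + basic_form {4,7} K)"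
  by (rule ext) (simp add: omega_def)

lemma ss1: "K \<subseteq> idx \<Longrightarrow> shuffle_sign {1} K = 1"
proof -
  assume K: "K \<subseteq> idx"
  have "{j \<in> K. j < 1} = {}" using K by (auto simp: idx_def)
  then have "cnt 1 K = 0" unfolding cnt_def by (simp only: card.empty)
  then show ?thesis using finite_sub_idx[OF K] by (simp add: ss_eq)
qed

lemma interior_phi: "interior 1 (phiL c p q) = (\<lambda>K. c * omega K)"
proof
  fix K
  show "interior 1 (phiL c p q) K = c * omega K"
  proof (cases "1 \<notin> K \<and> K \<subseteq> idx")
    case True
    have e: "basic_form {1,2,5} (insert 1 K) = basic_form {2,5} K"
      "basic_form {1,3,6} (insert 1 K) = basic_form {3,6} K"
      "basic_form {1,4,7} (insert 1 K) = basic_form {4,7} K"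
      using True by (auto simp: basic_form_def insert_ident)
    have z: "basic_form {2,3,4} (insert 1 K) = 0" "basic_form {2,6,7} (insert 1 K) = 0"
      "basic_form {3,5,7} (insert 1 K) = 0" "basic_form {4,5,6} (insert 1 K) = 0"
      "basic_form {2,3,7} (insert 1 K) = 0" "basic_form {2,4,6} (insert 1 K) = 0"
      "basic_form {3,4,5} (insert 1 K) = 0" "basic_form {5,6,7} (insert 1 K) = 0"
      by (auto simp: basic_form_def set_ins_eq)
    have i1: "(1::nat) \<in> idx" by (simp add: idx_def)
    have "interior 1 (phiL c p q) K = shuffle_sign {1} K *\<^sub>R phiL c p q (insert 1 K)"
      using True i1 by (simp add: interior_def)
    also have "\<dots> = c * omega K"
      unfolding phiL_def omega_def e z using True by (simp add: ss1 del: One_nat_def)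
    finally show ?thesis .
  next
    case False
    have "K \<noteq> {2,5} \<and> K \<noteq> {3,6} \<and> K \<noteq> {4,7}" using False by (auto simp: idx_def)
    then have "omega K = 0" by (simp add: omega_def basic_form_def)
    then show ?thesis using False by (auto simp: interior_def)
  qed
qed

lemma eo_fun: "wedge eta omega = (\<lambda>K. basic_form {1,2,5} K + basic_form {1,3,6} K + basic_form {1,4,7} K)"
proof
  fix K
  show "wedge eta omega K = basic_form {1,2,5} K + basic_form {1,3,6} K + basic_form {1,4,7} K"
  proof (cases "K \<subseteq> idx \<and> 1 \<in> K")
    case True
    have e: "\<And>A. 1 \<notin> A \<Longrightarrow> basic_form A (K - {1}) = basic_form (insert 1 A) K"
      using True by (auto simp: basic_form_def)
    have "K - {1} \<subseteq> idx" using True by auto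
    then show ?thesis using True by (simp add: eta_def wedge_basic ss1 omega_def e del: One_nat_def)
  next
    case False
    have "K \<noteq> {1,2,5} \<and> K \<noteq> {1,3,6} \<and> K \<noteq> {1,4,7}" using False by (auto simp: idx_def)
    moreover have "wedge eta omega K = 0" unfolding eta_def wedge_basic using False by auto
    ultimately show ?thesis by (simp add: basic_form_def)
  qed
qed

lemma wedge_smult_rr: "wedge f (\<lambda>K. r * (g::nat set \<Rightarrow> real) K) K = r * wedge f g K"
  by (simp add: wedge_def sum_distrib_left mult_ac real_scaleR_def)







lemma B11: "B_phi (phiL c p q) 1 1 = - 6 * c^3"
  unfolding B_phi_def interior_phi unfolding phiL_def
  apply (simp only: wedge_add_r wedge_diff_r wedge_smult_rr wedge_basic_right)
  apply (simp add: comp del: One_nat_def)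
  apply (simp only: wedge_smult wedge_smult_rr real_scaleR_def)
  unfolding omega_fun
  apply (simp only: wedge_add wedge_basic)
  apply (simp add: comp basic_form_def power3_eq_cube del: One_nat_def)
  done

lemma wedge3_zero: assumes two: "is_two_form F" and T3: "card T = 3" and K: "K \<subseteq> idx" and c2: "card K \<noteq> 2"
  shows "wedge (basic_form T) F (idx - K) = 0"
proof -
  have fi: "finite idx" "card idx = 7" by (auto simp: idx_def)
  have cK: "card K \<le> 7" using K fi card_mono by metis
  have cL: "card (idx - K) = 7 - card K" using K fi by (simp add: card_Diff_subset finite_subset)
  have "F (idx - K - T) = 0" if T: "T \<subseteq> idx - K"
  proof -
    have "finite T" using T fi finite_subset by blast
    then have "card (idx - K - T) = card (idx - K) - 3" using T T3 by (simp add: card_Diff_subset)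
    then have "card (idx - K - T) \<noteq> 2" using cL cK c2 by linarith
    then show ?thesis using two unfolding is_two_form_def by blast
  qed
  then show ?thesis by (simp add: wedge_basic)
qed

theorem lemma3p1:
  fixes y2 a b z :: real and F :: "nat set \<Rightarrow> 'v::real_vector"
  assumes "y2 > 0"
    and "z > 0" and "z^2 = 4 * (a^2 + b^2) powr (4/3)"
    and "induces_metric_g (phi_X y2 a b a b z)"
    and "is_two_form F"
    and "hodge (phi_orientation (phi_X y2 a b a b z)) (wedge (wedge eta omega) F) = F"
  shows "hodge (phi_orientation (phi_X y2 a b a b z)) (wedge (phi_X y2 a b a b z) F) = - F"
proof -
  define c where "c = - z / (2 * y2^2)"
  define p where "p = a / sqrt y2 ^ 3"
  define q where "q = b / sqrt y2 ^ 3"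
  have phi: "phi_X y2 a b a b z = phiL c p q" using phi_X_eq[OF assms(1)] unfolding c_def p_def q_def .
  have cneg: "c < 0" using assms(1,2) unfolding c_def by (simp add: divide_pos_pos)
  have c3: "c^3 < 0" using cneg by (simp add: power_less_zero_eq)
  have s1: "phi_orientation (phiL c p q) = 1" unfolding phi_orientation_def B11 using c3 by simp
  have i1: "(1::nat) \<in> idx" by (simp add: idx_def)
  have "B_phi (phiL c p q) 1 1 = 6" using assms(4) i1 unfolding phi induces_metric_g_def s1 by auto
  then have c31: "c^3 = -1" unfolding B11 by simp
  have "(c + 1) * (c^2 - c + 1) = 0" using c31 by (simp add: algebra_simps power2_eq_square power3_eq_cube)
  moreover have "c^2 - c + 1 > 0"
  proof -
    have "c^2 \<ge> 0" by simp
    then show ?thesis using cneg by linarith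
  qed
  ultimately have cm1: "c = -1" by simp
  have hyp: "hodge 1 (wedge (\<lambda>K. basic_form {1,2,5} K + basic_form {1,3,6} K + basic_form {1,4,7} K) F) = F"
    using assms(6) unfolding phi s1 eo_fun .
  have h: "\<And>K. hodge 1 (wedge (\<lambda>K. basic_form {1,2,5} K + basic_form {1,3,6} K + basic_form {1,4,7} K) F) K = F K"
    using hyp by simp
  note hs = hodge_def wedge_add wedge_basic comp
  have f12: "F {1,2} = 0" using h[of "{1,2}"] by (simp add: hs del: One_nat_def)
  have f13: "F {1,3} = 0" using h[of "{1,3}"] by (simp add: hs del: One_nat_def)
  have f14: "F {1,4} = 0" using h[of "{1,4}"] by (simp add: hs del: One_nat_def)
  have f15: "F {1,5} = 0" using h[of "{1,5}"] by (simp add: hs del: One_nat_def)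
  have f16: "F {1,6} = 0" using h[of "{1,6}"] by (simp add: hs del: One_nat_def)
  have f17: "F {1,7} = 0" using h[of "{1,7}"] by (simp add: hs del: One_nat_def)
  have f56: "F {5,6} = F {2,3}" using h[of "{2,3}"] by (simp add: hs del: One_nat_def)
  have f57: "F {5,7} = F {2,4}" using h[of "{2,4}"] by (simp add: hs del: One_nat_def)
  have f35: "F {3,5} = F {2,6}" using h[of "{2,6}"] by (simp add: hs del: One_nat_def)
  have f45: "F {4,5} = F {2,7}" using h[of "{2,7}"] by (simp add: hs del: One_nat_def)
  have f67: "F {6,7} = F {3,4}" using h[of "{3,4}"] by (simp add: hs del: One_nat_def)
  have f46: "F {4,6} = F {3,7}" using h[of "{3,7}"] by (simp add: hs del: One_nat_def)
  have f25: "F {2,5} = - F {3,6} - F {4,7}" using h[of "{2,5}"] by (simp add: hs algebra_simps del: One_nat_def)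
  note fs = f12 f13 f14 f15 f16 f17 f56 f57 f35 f45 f67 f46 f25
  show ?thesis unfolding phi s1 unfolding cm1
  proof (rule ext)
    fix K
    have "hodge 1 (wedge (phiL (- 1) p q) F) K = - F K"
    proof (cases "K \<subseteq> idx \<and> card K = 2")
      case True
      then obtain x y where K: "K = {x,y}" and xy: "x < y" and xi: "x \<in> idx" and yi: "y \<in> idx"
      proof -
        from True obtain u v where uv: "K = {u,v}" "u \<noteq> v" by (auto simp: card_2_iff)
        show ?thesis
        proof (cases "u < v")
          case True then show ?thesis using that uv \<open>K \<subseteq> idx \<and> card K = 2\<close> by auto
        next
          case False then have "v < u" using uv by simp
          then show ?thesis using that[of v u] uv \<open>K \<subseteq> idx \<and> card K = 2\<close> by (auto simp: insert_commute)
        qed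
      qed
      have "x = 1 \<or> x = 2 \<or> x = 3 \<or> x = 4 \<or> x = 5 \<or> x = 6 \<or> x = 7" using xi by (auto simp: idx_def)
      moreover have "y = 1 \<or> y = 2 \<or> y = 3 \<or> y = 4 \<or> y = 5 \<or> y = 6 \<or> y = 7" using yi by (auto simp: idx_def)
      ultimately show ?thesis unfolding K phiL_def using xy
        apply (elim disjE)
        apply (simp_all only: hodge_def wedge_add wedge_diff wedge_smult wedge_basic)
        apply (simp_all add: comp fs algebra_simps del: One_nat_def)
        done
    next
      case False
      show ?thesis
      proof (cases "K \<subseteq> idx")
        case True
        then have c2: "card K \<noteq> 2" using False by simp
        have "F K = 0" using assms(5) c2 unfolding is_two_form_def by auto
        moreover have "hodge 1 (wedge (phiL (- 1) p q) F) K = 0"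
          unfolding hodge_def phiL_def using True
          by (simp only: wedge_add wedge_diff wedge_smult wedge3_zero[OF assms(5) _ True c2])
             (simp add: wedge3_zero[OF assms(5) _ True c2])
        ultimately show ?thesis by simp
      next
        case False
        then have "F K = 0" using assms(5) unfolding is_two_form_def by auto
        then show ?thesis using False by (simp add: hodge_def)
      qed
    qed
    then show "hodge 1 (wedge (phiL (- 1) p q) F) K = (- F) K" by simp
  qed
qed

end
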